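(* Let $\mathcal{M}$ be a separable metric space, let $f:\mathcal{M}\to\mathcal{M}$ be a continuous bijection with continuous inverse, and let $\mathcal{X}\subseteq\mathcal{M}$ be forward invariant under $f$ and path connected. Consider $x_{k+1}=f(x_k)$ on $\mathcal{X}$ with set of $\omega$-limit sets $\mathcal{W}$ and set of $\alpha$-limit sets $\mathcal{A}$. Suppose: (T1) there exist a separable metric space $\mathcal{Z}$, a continuous bijection $g:\mathcal{Z}\to\mathcal{Z}$ with continuous inverse, and a continuous map $F:\mathcal{X}\to\mathcal{Z}$ with $F\circ f=g\circ F$ on $\mathcal{X}$, such that $z_{k+1}=g(z_k)$ and $z_{k+1}=g^{-1}(z_k)$ on $\mathcal{Z}$ both have closed basins; (T2) every trajectory in $\mathcal{X}$ is forward precompact or backward precompact in $\mathcal{X}$; (T3) $\mathcal{W}\cup\mathcal{A}$ is countable. Let $\widehat{\mathcal{W}}$ be the set of $\Omega\in\mathcal{W}$ such that $D^+_{\mathcal{X}}(\Omega)$ contains a point whose trajectory is forward precompact in $\mathcal{X}$, and let $\widehat{\mathcal{A}}$ be the set of $\Gamma\in\mathcal{A}$ such that $D^-_{\mathcal{X}}(\Gamma)$ contains a point whose trajectory is backward precompact in $\mathcal{X}$. Then $F(S)=F(S')$ for all $S,S'\in\widehat{\mathcal{W}}\cup\widehat{\mathcal{A}}$.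
   Context: Forward orbit of $\xi$: $\{f^k(\xi)\mid k\in\mathbb{N}\}$; backward orbit: $\{f^{-k}(\xi)\mid k\in\mathbb{N}\}$. A set is precompact in $\mathcal{X}$ if its closure in $\mathcal{X}$ is compact; a trajectory is forward (backward) precompact if its forward (backward) orbit is precompact. $\omega_{\mathcal{X}}(\xi)$ is the set of $x\in\mathcal{X}$ with $f^{k_j}(\xi)\to x$ for some $k_j\to\infty$; $\alpha_{\mathcal{X}}(\xi)$ likewise with $f^{-k_j}$. $\mathcal{W}=\{\omega_{\mathcal{X}}(\xi)\mid\xi\in\mathcal{X}\}$, $\mathcal{A}=\{\alpha_{\mathcal{X}}(\xi)\mid\xi\in\mathcal{X}\}$, $D^+_{\mathcal{X}}(\Omega)=\{\xi\in\mathcal{X}\mid\omega_{\mathcal{X}}(\xi)=\Omega\}$, $D^-_{\mathcal{X}}(\Gamma)=\{\xi\in\mathcal{X}\mid\alpha_{\mathcal{X}}(\xi)=\Gamma\}$. A system has closed basins if the domain of attraction of each of its $\omega$-limit sets is closed (for a time reversal: each domain of repulsion of each $\alpha$-limit set of the original system is closed). Same notions on $\mathcal{Z}$ for $g$. *)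

theory Defs
  imports "HOL-Analysis.Analysis"
begin

definition separable_space :: "'a::metric_space itself \<Rightarrow> bool" where
  "separable_space _ \<longleftrightarrow> (\<exists>D::'a set. countable D \<and> closure D = UNIV)"

definition homeomorphism_self :: "('a::metric_space \<Rightarrow> 'a) \<Rightarrow> bool" where
  "homeomorphism_self f \<longleftrightarrow> bij f \<and> continuous_on UNIV f \<and> continuous_on UNIV (inv f)"

definition fwd_orbit :: "('a \<Rightarrow> 'a) \<Rightarrow> 'a \<Rightarrow> 'a set" where
  "fwd_orbit f \<xi> = range (\<lambda>k. (f ^^ k) \<xi>)"

definition bwd_orbit :: "('a \<Rightarrow> 'a) \<Rightarrow> 'a \<Rightarrow> 'a set" where
  "bwd_orbit f \<xi> = range (\<lambda>k. (inv f ^^ k) \<xi>)"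

definition precompact_in :: "'a::metric_space set \<Rightarrow> 'a set \<Rightarrow> bool" where
  "precompact_in X S \<longleftrightarrow> S \<subseteq> X \<and> compact (X \<inter> closure S)"

definition omega_lim :: "'a::metric_space set \<Rightarrow> ('a \<Rightarrow> 'a) \<Rightarrow> 'a \<Rightarrow> 'a set" where
  "omega_lim X f \<xi> = {x \<in> X. \<exists>k::nat \<Rightarrow> nat. filterlim k at_top sequentially \<and>
       (\<lambda>j. (f ^^ k j) \<xi>) \<longlonglongrightarrow> x}"

definition alpha_lim :: "'a::metric_space set \<Rightarrow> ('a \<Rightarrow> 'a) \<Rightarrow> 'a \<Rightarrow> 'a set" where
  "alpha_lim X f \<xi> = {x \<in> X. \<exists>k::nat \<Rightarrow> nat. filterlim k at_top sequentially \<and>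
       (\<lambda>j. (inv f ^^ k j) \<xi>) \<longlonglongrightarrow> x}"

definition omega_sets :: "'a::metric_space set \<Rightarrow> ('a \<Rightarrow> 'a) \<Rightarrow> 'a set set" where
  "omega_sets X f = (omega_lim X f) ` X"

definition alpha_sets :: "'a::metric_space set \<Rightarrow> ('a \<Rightarrow> 'a) \<Rightarrow> 'a set set" where
  "alpha_sets X f = (alpha_lim X f) ` X"

definition dom_attr :: "'a::metric_space set \<Rightarrow> ('a \<Rightarrow> 'a) \<Rightarrow> 'a set \<Rightarrow> 'a set" where
  "dom_attr X f \<Omega> = {\<xi> \<in> X. omega_lim X f \<xi> = \<Omega>}"

definition dom_rep :: "'a::metric_space set \<Rightarrow> ('a \<Rightarrow> 'a) \<Rightarrow> 'a set \<Rightarrow> 'a set" where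
  "dom_rep X f \<Gamma> = {\<xi> \<in> X. alpha_lim X f \<xi> = \<Gamma>}"

definition closed_basins :: "'a::metric_space set \<Rightarrow> ('a \<Rightarrow> 'a) \<Rightarrow> bool" where
  "closed_basins X f \<longleftrightarrow> (\<forall>\<Omega> \<in> omega_sets X f. closedin (top_of_set X) (dom_attr X f \<Omega>))"

definition closed_basins_rev :: "'a::metric_space set \<Rightarrow> ('a \<Rightarrow> 'a) \<Rightarrow> bool" where
  "closed_basins_rev X f \<longleftrightarrow> (\<forall>\<Gamma> \<in> alpha_sets X f. closedin (top_of_set X) (dom_rep X f \<Gamma>))"

definition W_hat :: "'a::metric_space set \<Rightarrow> ('a \<Rightarrow> 'a) \<Rightarrow> 'a set set" where
  "W_hat X f = {\<Omega> \<in> omega_sets X f. \<exists>\<xi> \<in> dom_attr X f \<Omega>. precompact_in X (fwd_orbit f \<xi>)}"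

definition A_hat :: "'a::metric_space set \<Rightarrow> ('a \<Rightarrow> 'a) \<Rightarrow> 'a set set" where
  "A_hat X f = {\<Gamma> \<in> alpha_sets X f. \<exists>\<xi> \<in> dom_rep X f \<Gamma>. precompact_in X (bwd_orbit f \<xi>)}"

end

theory Submission
  imports Defs
begin

lemma funpow_inv_cancel:
  fixes p :: "'a \<Rightarrow> 'a"
  assumes "bij p"
  shows "(p ^^ (m + n)) ((inv p ^^ n) z) = (p ^^ m) z"
proof (induction n)
  case 0 then show ?case by simp
next
  case (Suc n)
  have e1: "(inv p ^^ Suc n) z = inv p ((inv p ^^ n) z)" by simp
  have e2: "(p ^^ Suc k) x = (p ^^ k) (p x)" for k x by (simp add: funpow_swap1)
  have "(p ^^ (m + Suc n)) ((inv p ^^ Suc n) z) = (p ^^ (m + n)) (p (inv p ((inv p ^^ n) z)))"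
    by (simp only: add_Suc_right e1 e2)
  also have "\<dots> = (p ^^ (m + n)) ((inv p ^^ n) z)"
    by (simp only: surj_f_inv_f[OF bij_is_surj[OF assms]])
  finally show ?case using Suc by simp
qed

lemma funpow_inv_cancel2:
  fixes p :: "'a \<Rightarrow> 'a"
  assumes "bij p"
  shows "(inv p ^^ n) ((p ^^ n) z) = z"
  using funpow_inv_cancel[OF bij_imp_bij_inv[OF assms], of 0 n z] inv_inv_eq[OF assms] by simp

lemma omega_char:
  "y \<in> omega_lim X p \<xi> \<longleftrightarrow> y \<in> X \<and> (\<forall>e>0. \<forall>N. \<exists>n\<ge>N. dist ((p ^^ n) \<xi>) y < e)"
proof
  assume "y \<in> omega_lim X p \<xi>"
  then obtain k where y: "y \<in> X" and k: "filterlim k at_top sequentially"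
    and t: "(\<lambda>j. (p ^^ k j) \<xi>) \<longlonglongrightarrow> y"
    unfolding omega_lim_def by blast
  have "\<exists>n\<ge>N. dist ((p ^^ n) \<xi>) y < e" if "e > 0" for e N
  proof -
    have "eventually (\<lambda>j. dist ((p ^^ k j) \<xi>) y < e) sequentially"
      using tendstoD[OF t that] .
    moreover have "eventually (\<lambda>j. N \<le> k j) sequentially"
      using k filterlim_at_top by blast
    ultimately have "eventually (\<lambda>j. dist ((p ^^ k j) \<xi>) y < e \<and> N \<le> k j) sequentially"
      by (rule eventually_conj)
    then obtain j where "dist ((p ^^ k j) \<xi>) y < e \<and> N \<le> k j"
      unfolding eventually_sequentially by blast
    then show ?thesis by blast
  qed
  then show "y \<in> X \<and> (\<forall>e>0. \<forall>N. \<exists>n\<ge>N. dist ((p ^^ n) \<xi>) y < e)" using y by blast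
next
  assume a: "y \<in> X \<and> (\<forall>e>0. \<forall>N. \<exists>n\<ge>N. dist ((p ^^ n) \<xi>) y < e)"
  have "\<forall>j. \<exists>n\<ge>j. dist ((p ^^ n) \<xi>) y < inverse (real (Suc j))"
    using a by simp
  then obtain k where k: "\<And>j. k j \<ge> j \<and> dist ((p ^^ k j) \<xi>) y < inverse (real (Suc j))"
    by metis
  have "filterlim k at_top sequentially"
    unfolding filterlim_at_top eventually_sequentially using k le_trans by blast
  moreover have "(\<lambda>j. (p ^^ k j) \<xi>) \<longlonglongrightarrow> y"
    unfolding lim_sequentially
  proof (intro allI impI)
    fix r :: real assume "r > 0"
    then obtain N where N: "inverse (real (Suc N)) < r" using reals_Archimedean by blast
    have "dist ((p ^^ k n) \<xi>) y < r" if "n \<ge> N" for n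
    proof -
      have "inverse (real (Suc n)) \<le> inverse (real (Suc N))"
        using that by (simp add: le_imp_inverse_le)
      then show ?thesis using k[of n] N by linarith
    qed
    then show "\<exists>no. \<forall>n\<ge>no. dist ((p ^^ k n) \<xi>) y < r" by blast
  qed
  ultimately show "y \<in> omega_lim X p \<xi>" unfolding omega_lim_def using a by blast
qed

lemma omega_sub_closure:
  "omega_lim X p \<xi> \<subseteq> closure (fwd_orbit p \<xi>)"
proof
  fix y assume "y \<in> omega_lim X p \<xi>"
  then have "\<forall>e>0. \<exists>n. dist ((p ^^ n) \<xi>) y < e" unfolding omega_char by blast
  then show "y \<in> closure (fwd_orbit p \<xi>)"
    unfolding closure_approachable fwd_orbit_def by blast
qed

lemma omega_closedin:
  assumes "y \<in> X" "y \<in> closure (omega_lim X p \<xi>)"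
  shows "y \<in> omega_lim X p \<xi>"
  unfolding omega_char
proof (intro conjI allI impI assms(1))
  fix e :: real and N assume "e > 0"
  then obtain u where u: "u \<in> omega_lim X p \<xi>" "dist u y < e/2"
    using assms(2) unfolding closure_approachable by (meson half_gt_zero)
  then obtain n where "n \<ge> N" "dist ((p ^^ n) \<xi>) u < e/2"
    using \<open>e > 0\<close> unfolding omega_char by (meson half_gt_zero)
  then show "\<exists>n\<ge>N. dist ((p ^^ n) \<xi>) y < e"
    using u dist_triangle_half_r[of u] by (metis dist_commute dist_triangle_half_l)
qed

lemma omega_shift:
  assumes "bij p"
  shows "omega_lim UNIV p ((inv p ^^ n) z) = omega_lim UNIV p z"
proof (intro set_eqI)
  fix y
  show "y \<in> omega_lim UNIV p ((inv p ^^ n) z) \<longleftrightarrow> y \<in> omega_lim UNIV p z"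
    unfolding omega_char
  proof safe
    fix e :: real and N assume A: "\<forall>e>0. \<forall>N. \<exists>m\<ge>N. dist ((p ^^ m) ((inv p ^^ n) z)) y < e" "e > 0"
    then obtain m where "m \<ge> N + n" "dist ((p ^^ m) ((inv p ^^ n) z)) y < e" by blast
    moreover have "(p ^^ m) ((inv p ^^ n) z) = (p ^^ (m - n)) z"
      using funpow_inv_cancel[OF assms, of "m - n" n z] \<open>m \<ge> N + n\<close> by simp
    moreover have "m - n \<ge> N" using \<open>m \<ge> N + n\<close> by simp
    ultimately show "\<exists>m\<ge>N. dist ((p ^^ m) z) y < e"
      by metis
  next
    fix e :: real and N assume A: "\<forall>e>0. \<forall>N. \<exists>m\<ge>N. dist ((p ^^ m) z) y < e" "e > 0"
    then obtain m where "m \<ge> N" "dist ((p ^^ m) z) y < e" by blast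
    moreover have "(p ^^ (m + n)) ((inv p ^^ n) z) = (p ^^ m) z"
      using funpow_inv_cancel[OF assms] by simp
    ultimately show "\<exists>m\<ge>N. dist ((p ^^ m) ((inv p ^^ n) z)) y < e"
      by (metis trans_le_add1)
  qed
qed


lemma precompact_closure_sub:
  assumes "precompact_in X S" shows "closure S \<subseteq> X"
proof -
  have c: "compact (X \<inter> closure S)" "S \<subseteq> X" using assms unfolding precompact_in_def by auto
  have "S \<subseteq> X \<inter> closure S" using c(2) closure_subset by blast
  then have "closure S \<subseteq> X \<inter> closure S"
    using closure_minimal compact_imp_closed[OF c(1)] by blast
  then show ?thesis by blast
qed

lemma omega_nonempty:
  assumes "precompact_in X (fwd_orbit p \<xi>)"
  shows "omega_lim X p \<xi> \<noteq> {}"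
proof -
  have K: "compact (X \<inter> closure (fwd_orbit p \<xi>))" and sub: "fwd_orbit p \<xi> \<subseteq> X"
    using assms unfolding precompact_in_def by auto
  have o1: "(p ^^ n) \<xi> \<in> fwd_orbit p \<xi>" for n unfolding fwd_orbit_def by (rule rangeI)
  have "\<forall>n. (p ^^ n) \<xi> \<in> X \<inter> closure (fwd_orbit p \<xi>)"
    using IntI[OF subsetD[OF sub o1] subsetD[OF closure_subset o1]] by blast
  from seq_compactE[OF compact_imp_seq_compact[OF K] this]
  obtain l and r :: "nat \<Rightarrow> nat" where l: "l \<in> X \<inter> closure (fwd_orbit p \<xi>)" "strict_mono r"
    "((\<lambda>n. (p ^^ n) \<xi>) \<circ> r) \<longlonglongrightarrow> l" .
  have "l \<in> omega_lim X p \<xi>"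
  proof -
    have "(\<lambda>j. (p ^^ r j) \<xi>) \<longlonglongrightarrow> l" using l(3) by (simp add: o_def)
    then show ?thesis unfolding omega_lim_def using l(1) filterlim_subseq[OF l(2)] by blast
  qed
  then show ?thesis by blast
qed

lemma omega_transfer:
  fixes F :: "'a::metric_space \<Rightarrow> 'b::metric_space"
  assumes Fc: "continuous_on X F" and pc: "precompact_in X (fwd_orbit p \<xi>)"
    and cj: "\<And>k. F ((p ^^ k) \<xi>) = (q ^^ k) (F \<xi>)"
  shows "omega_lim UNIV q (F \<xi>) = F ` omega_lim X p \<xi>"
proof
  have K: "compact (X \<inter> closure (fwd_orbit p \<xi>))" and sub: "fwd_orbit p \<xi> \<subseteq> X"
    using pc unfolding precompact_in_def by auto
  have inX: "(p ^^ n) \<xi> \<in> X" for n using sub unfolding fwd_orbit_def by (simp add: image_subset_iff)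
  show "F ` omega_lim X p \<xi> \<subseteq> omega_lim UNIV q (F \<xi>)"
  proof
    fix z assume "z \<in> F ` omega_lim X p \<xi>"
    then obtain x k where x: "x \<in> X" "z = F x" "filterlim k at_top sequentially"
      "(\<lambda>j. (p ^^ k j) \<xi>) \<longlonglongrightarrow> x"
      unfolding omega_lim_def by blast
    have "(\<lambda>j. F ((p ^^ k j) \<xi>)) \<longlonglongrightarrow> F x"
      using continuous_on_tendsto_compose[OF Fc x(4) x(1)] inX by simp
    then have "(\<lambda>j. (q ^^ k j) (F \<xi>)) \<longlonglongrightarrow> z" using cj x(2) by simp
    then show "z \<in> omega_lim UNIV q (F \<xi>)" unfolding omega_lim_def using x(3) by blast
  qed
  show "omega_lim UNIV q (F \<xi>) \<subseteq> F ` omega_lim X p \<xi>"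
  proof
    fix z assume "z \<in> omega_lim UNIV q (F \<xi>)"
    then obtain k where k: "filterlim k at_top sequentially"
      "(\<lambda>j. (q ^^ k j) (F \<xi>)) \<longlonglongrightarrow> z"
      unfolding omega_lim_def by blast
    have o1: "(p ^^ n) \<xi> \<in> fwd_orbit p \<xi>" for n unfolding fwd_orbit_def by (rule rangeI)
    have "\<forall>n. (p ^^ k n) \<xi> \<in> X \<inter> closure (fwd_orbit p \<xi>)"
      using IntI[OF subsetD[OF sub o1] subsetD[OF closure_subset o1]] by blast
    from seq_compactE[OF compact_imp_seq_compact[OF K] this]
    obtain l and r :: "nat \<Rightarrow> nat" where l: "l \<in> X \<inter> closure (fwd_orbit p \<xi>)" "strict_mono r"
      "((\<lambda>n. (p ^^ k n) \<xi>) \<circ> r) \<longlonglongrightarrow> l" .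
    have t1: "(\<lambda>j. (p ^^ k (r j)) \<xi>) \<longlonglongrightarrow> l" using l(3) by (simp add: o_def)
    have "(\<lambda>j. F ((p ^^ k (r j)) \<xi>)) \<longlonglongrightarrow> F l"
      using continuous_on_tendsto_compose[OF Fc t1] l(1) inX by simp
    then have a1: "(\<lambda>j. (q ^^ k (r j)) (F \<xi>)) \<longlonglongrightarrow> F l" using cj by simp
    have a2: "(\<lambda>j. (q ^^ k (r j)) (F \<xi>)) \<longlonglongrightarrow> z"
      using LIMSEQ_subseq_LIMSEQ[OF k(2) l(2)] by (simp add: o_def)
    have "z = F l" using LIMSEQ_unique[OF a2 a1] .
    moreover have "filterlim (\<lambda>j. k (r j)) at_top sequentially"
      using filterlim_compose[OF k(1) filterlim_subseq[OF l(2)]] by simp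
    then have "l \<in> omega_lim X p \<xi>" unfolding omega_lim_def using l(1) t1 by blast
    ultimately show "z \<in> F ` omega_lim X p \<xi>" by blast
  qed
qed

lemma omega_fwd_inv:
  assumes hom: "homeomorphism_self p" and pc: "precompact_in X (fwd_orbit p \<xi>)"
    and y: "y \<in> omega_lim X p \<xi>"
  shows "p y \<in> omega_lim X p \<xi>"
proof -
  have cont: "continuous_on UNIV p" using hom unfolding homeomorphism_self_def by blast
  have appr: "\<exists>n\<ge>N. dist ((p ^^ n) \<xi>) (p y) < e" if "e > 0" for e N
  proof -
    obtain d where d: "d > 0" "\<And>x'. dist x' y < d \<Longrightarrow> dist (p x') (p y) < e"
      using cont \<open>e > 0\<close> unfolding continuous_on_iff by blast
    obtain n where "n \<ge> N" "dist ((p ^^ n) \<xi>) y < d" using y d(1) unfolding omega_char by blast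
    then have "Suc n \<ge> N" "dist ((p ^^ Suc n) \<xi>) (p y) < e" using d(2) by auto
    then show ?thesis by blast
  qed
  have "p y \<in> closure (fwd_orbit p \<xi>)"
    unfolding closure_approachable fwd_orbit_def using appr by blast
  then have "p y \<in> X" using precompact_closure_sub[OF pc] by blast
  then show ?thesis unfolding omega_char using appr by blast
qed

lemma omega_bwd_inv:
  assumes hom: "homeomorphism_self p" and pc: "precompact_in X (fwd_orbit p \<xi>)"
    and y: "y \<in> omega_lim X p \<xi>"
  shows "inv p y \<in> omega_lim X p \<xi>"
proof -
  have cont: "continuous_on UNIV (inv p)" and bij: "bij p"
    using hom unfolding homeomorphism_self_def by blast+
  have appr: "\<exists>n\<ge>N. dist ((p ^^ n) \<xi>) (inv p y) < e" if "e > 0" for e N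
  proof -
    obtain d where d: "d > 0" "\<And>x'. dist x' y < d \<Longrightarrow> dist (inv p x') (inv p y) < e"
      using cont \<open>e > 0\<close> unfolding continuous_on_iff by blast
    obtain n where n: "n \<ge> Suc N" "dist ((p ^^ n) \<xi>) y < d" using y d(1) unfolding omega_char by blast
    define m where "m = n - 1"
    have m: "n = Suc m" "m \<ge> N" using n(1) unfolding m_def by auto
    have "inv p ((p ^^ n) \<xi>) = (p ^^ m) \<xi>"
      using m(1) inv_f_f[OF bij_is_inj[OF bij]] by simp
    then have "dist ((p ^^ m) \<xi>) (inv p y) < e" using d(2)[OF n(2)] by simp
    then show ?thesis using m(2) by blast
  qed
  have "inv p y \<in> closure (fwd_orbit p \<xi>)"
    unfolding closure_approachable fwd_orbit_def using appr by blast
  then have "inv p y \<in> X" using precompact_closure_sub[OF pc] by blast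
  then show ?thesis unfolding omega_char using appr by blast
qed

lemma orbit_in_omega:
  assumes hom: "homeomorphism_self p" and pc: "precompact_in X (fwd_orbit p \<xi>)"
    and y: "y \<in> omega_lim X p \<xi>"
  shows "fwd_orbit p y \<subseteq> omega_lim X p \<xi>" "fwd_orbit (inv p) y \<subseteq> omega_lim X p \<xi>"
proof -
  have "(p ^^ k) y \<in> omega_lim X p \<xi>" for k
  proof (induction k)
    case 0 then show ?case using y by simp
  next
    case (Suc k) then show ?case using omega_fwd_inv[OF hom pc Suc] by simp
  qed
  then show "fwd_orbit p y \<subseteq> omega_lim X p \<xi>" unfolding fwd_orbit_def by blast
  have "(inv p ^^ k) y \<in> omega_lim X p \<xi>" for k
  proof (induction k)
    case 0 then show ?case using y by simp
  next
    case (Suc k) then show ?case using omega_bwd_inv[OF hom pc Suc] by simp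
  qed
  then show "fwd_orbit (inv p) y \<subseteq> omega_lim X p \<xi>" unfolding fwd_orbit_def by blast
qed

lemma precompact_sub_omega:
  assumes pc: "precompact_in X (fwd_orbit p \<xi>)" and T: "T \<subseteq> omega_lim X p \<xi>"
  shows "precompact_in X T"
proof -
  have K: "compact (X \<inter> closure (fwd_orbit p \<xi>))"
    using pc unfolding precompact_in_def by auto
  have o: "omega_lim X p \<xi> \<subseteq> X" unfolding omega_lim_def by blast
  have "T \<subseteq> closure (fwd_orbit p \<xi>)"
    using T omega_sub_closure by blast
  then have "closure T \<subseteq> closure (fwd_orbit p \<xi>)"
    using closure_minimal closed_closure by blast
  then have "X \<inter> closure T = (X \<inter> closure (fwd_orbit p \<xi>)) \<inter> closure T" by blast
  then have "compact (X \<inter> closure T)" using compact_Int_closed[OF K closed_closure] by simp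
  then show ?thesis unfolding precompact_in_def using T o by blast
qed

lemma omega_sub_omega:
  assumes "fwd_orbit r y \<subseteq> omega_lim X p \<xi>"
  shows "omega_lim X r y \<subseteq> omega_lim X p \<xi>"
proof
  fix u assume u: "u \<in> omega_lim X r y"
  then have "u \<in> X" unfolding omega_lim_def by blast
  moreover have "u \<in> closure (omega_lim X p \<xi>)"
    using u omega_sub_closure closure_mono[OF assms] by blast
  ultimately show "u \<in> omega_lim X p \<xi>" by (rule omega_closedin)
qed

lemma iter_conj:
  assumes H: "\<And>x. x \<in> X \<Longrightarrow> p x \<in> X \<Longrightarrow> F (p x) = q (F x)"
    and sub: "fwd_orbit p y \<subseteq> X"
  shows "F ((p ^^ k) y) = (q ^^ k) (F y)"
proof (induction k)
  case 0 then show ?case by simp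
next
  case (Suc k)
  have "(p ^^ k) y \<in> X" "(p ^^ Suc k) y \<in> X" using sub unfolding fwd_orbit_def by blast+
  then show ?case using H[of "(p ^^ k) y"] Suc by simp
qed

lemma good_lemma:
  fixes F :: "'a::metric_space \<Rightarrow> 'b::metric_space"
  assumes homp: "homeomorphism_self p"
    and Fc: "continuous_on X F"
    and H1: "\<And>x. x \<in> X \<Longrightarrow> p x \<in> X \<Longrightarrow> F (p x) = q (F x)"
    and H2: "\<And>x. x \<in> X \<Longrightarrow> inv p x \<in> X \<Longrightarrow> F (inv p x) = inv q (F x)"
    and pc: "precompact_in X (fwd_orbit p \<xi>)"
  shows "\<exists>u \<in> omega_lim UNIV q (F \<xi>). omega_lim UNIV q u \<subseteq> omega_lim UNIV q (F \<xi>)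
           \<and> omega_lim UNIV (inv q) u \<subseteq> omega_lim UNIV q (F \<xi>)"
proof -
  have sub: "fwd_orbit p \<xi> \<subseteq> X" using pc unfolding precompact_in_def by blast
  have v: "omega_lim UNIV q (F \<xi>) = F ` omega_lim X p \<xi>"
    using omega_transfer[OF Fc pc iter_conj[where X=X and p=p and q=q and F=F, OF H1 sub]] .
  obtain y where y: "y \<in> omega_lim X p \<xi>" using omega_nonempty[OF pc] by blast
  have o: "omega_lim X p \<xi> \<subseteq> X" unfolding omega_lim_def by blast
  note orb = orbit_in_omega[OF homp pc y]
  have pc1: "precompact_in X (fwd_orbit p y)" by (rule precompact_sub_omega[OF pc orb(1)])
  have pc2: "precompact_in X (fwd_orbit (inv p) y)" by (rule precompact_sub_omega[OF pc orb(2)])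
  have s1: "fwd_orbit p y \<subseteq> X" using orb(1) o by blast
  have s2: "fwd_orbit (inv p) y \<subseteq> X" using orb(2) o by blast
  have e1: "omega_lim UNIV q (F y) = F ` omega_lim X p y"
    by (rule omega_transfer[OF Fc pc1 iter_conj[where X=X and p=p and q=q and F=F and y=y, OF H1 s1]])
  have e2: "omega_lim UNIV (inv q) (F y) = F ` omega_lim X (inv p) y"
    by (rule omega_transfer[OF Fc pc2 iter_conj[where X=X and p="inv p" and q="inv q" and F=F and y=y, OF H2 s2]])
  have "F y \<in> omega_lim UNIV q (F \<xi>)" using v y by blast
  moreover have "omega_lim UNIV q (F y) \<subseteq> omega_lim UNIV q (F \<xi>)"
    unfolding e1 v by (rule image_mono[OF omega_sub_omega[OF orb(1)]])
  moreover have "omega_lim UNIV (inv q) (F y) \<subseteq> omega_lim UNIV q (F \<xi>)"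
    unfolding e2 v by (rule image_mono[OF omega_sub_omega[OF orb(2)]])
  ultimately show ?thesis by blast
qed


lemma alpha_eq: "alpha_lim X f = omega_lim X (inv f)"
  by (rule ext) (simp add: alpha_lim_def omega_lim_def)

lemma bwd_eq: "bwd_orbit f = fwd_orbit (inv f)"
  by (rule ext) (simp add: bwd_orbit_def fwd_orbit_def)

lemma basin_closed:
  assumes "closed_basins UNIV g"
  shows "closed {x. omega_lim UNIV g x = v}"
proof (cases "v \<in> omega_sets UNIV g")
  case True
  then have "closedin (top_of_set UNIV) (dom_attr UNIV g v)"
    using assms unfolding closed_basins_def by blast
  then show ?thesis unfolding dom_attr_def by simp
next
  case False
  then have "{x. omega_lim UNIV g x = v} = {}" unfolding omega_sets_def by auto
  then show ?thesis by simp
qed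

lemma basin_closed_rev:
  assumes "closed_basins_rev UNIV g"
  shows "closed {x. omega_lim UNIV (inv g) x = v}"
proof (cases "v \<in> alpha_sets UNIV g")
  case True
  then have "closedin (top_of_set UNIV) (dom_rep UNIV g v)"
    using assms unfolding closed_basins_rev_def by blast
  then show ?thesis unfolding dom_rep_def alpha_eq by simp
next
  case False
  then have "{x. omega_lim UNIV (inv g) x = v} = {}" unfolding alpha_sets_def alpha_eq by auto
  then show ?thesis by simp
qed

lemma key_Z:
  fixes g :: "'b::metric_space \<Rightarrow> 'b"
  assumes homg: "homeomorphism_self g" and cbg: "closed_basins UNIV g"
    and cbr: "closed_basins_rev UNIV g"
    and gv: "\<exists>u\<in>v. omega_lim UNIV g u \<subseteq> v \<and> omega_lim UNIV (inv g) u \<subseteq> v"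
    and gw: "\<exists>u\<in>w. omega_lim UNIV g u \<subseteq> w \<and> omega_lim UNIV (inv g) u \<subseteq> w"
    and zv: "omega_lim UNIV g z = v" and zw: "omega_lim UNIV (inv g) z = w"
  shows "v = w"
proof
  have bij: "bij g" using homg unfolding homeomorphism_self_def by blast
  have bij': "bij (inv g)" using bij_imp_bij_inv[OF bij] .
  show "w \<subseteq> v"
  proof -
    obtain u where u: "u \<in> v" "omega_lim UNIV (inv g) u \<subseteq> v" using gv by blast
    have cl: "closed {x. omega_lim UNIV (inv g) x = w}" by (rule basin_closed_rev[OF cbr])
    have "fwd_orbit g z \<subseteq> {x. omega_lim UNIV (inv g) x = w}"
    proof
      fix x assume "x \<in> fwd_orbit g z"
      then obtain n where "x = (g ^^ n) z" unfolding fwd_orbit_def by blast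
      then have "x = (inv (inv g) ^^ n) z" using inv_inv_eq[OF bij] by simp
      then show "x \<in> {x. omega_lim UNIV (inv g) x = w}" using omega_shift[OF bij', of n z] zw by simp
    qed
    from closure_minimal[OF this cl]
    have "closure (fwd_orbit g z) \<subseteq> {x. omega_lim UNIV (inv g) x = w}" .
    moreover have "u \<in> closure (fwd_orbit g z)"
      using u(1) zv subsetD[OF omega_sub_closure] by blast
    ultimately have "omega_lim UNIV (inv g) u = w" by blast
    then show ?thesis using u(2) by simp
  qed
  show "v \<subseteq> w"
  proof -
    obtain u where u: "u \<in> w" "omega_lim UNIV g u \<subseteq> w" using gw by blast
    have cl: "closed {x. omega_lim UNIV g x = v}" by (rule basin_closed[OF cbg])
    have "fwd_orbit (inv g) z \<subseteq> {x. omega_lim UNIV g x = v}"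
    proof
      fix x assume "x \<in> fwd_orbit (inv g) z"
      then obtain n where "x = (inv g ^^ n) z" unfolding fwd_orbit_def by blast
      then show "x \<in> {x. omega_lim UNIV g x = v}" using omega_shift[OF bij, of n z] zv by simp
    qed
    from closure_minimal[OF this cl]
    have "closure (fwd_orbit (inv g) z) \<subseteq> {x. omega_lim UNIV g x = v}" .
    moreover have "u \<in> closure (fwd_orbit (inv g) z)"
      using u(1) zw subsetD[OF omega_sub_closure] by blast
    ultimately have "omega_lim UNIV g u = v" by blast
    then show ?thesis using u(2) by simp
  qed
qed

theorem lemma28:
  fixes f :: "'a::metric_space \<Rightarrow> 'a" and X :: "'a set"
    and g :: "'b::metric_space \<Rightarrow> 'b" and F :: "'a \<Rightarrow> 'b"
  assumes sepM: "separable_space TYPE('a)"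
    and homf: "homeomorphism_self f"
    and inv: "f ` X \<subseteq> X"
    and pc: "path_connected X"
    and sepZ: "separable_space TYPE('b)"
    and homg: "homeomorphism_self g"
    and Fcont: "continuous_on X F"
    and conj: "\<And>x. x \<in> X \<Longrightarrow> F (f x) = g (F x)"
    and cbg: "closed_basins UNIV g"
    and cbginv: "closed_basins_rev UNIV g"
    and T2: "\<And>\<xi>. \<xi> \<in> X \<Longrightarrow> precompact_in X (fwd_orbit f \<xi>) \<or> precompact_in X (bwd_orbit f \<xi>)"
    and T3: "countable (omega_sets X f \<union> alpha_sets X f)"
  shows "\<forall>S \<in> W_hat X f \<union> A_hat X f. \<forall>S' \<in> W_hat X f \<union> A_hat X f. F ` S = F ` S'"
proof -
  have bijf: "bij f" and bijg: "bij g"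
    using homf homg unfolding homeomorphism_self_def by blast+
  have homfi: "homeomorphism_self (inv f)"
    using homf bij_imp_bij_inv[OF bijf] inv_inv_eq[OF bijf] unfolding homeomorphism_self_def by simp
  have H1: "\<And>x. x \<in> X \<Longrightarrow> f x \<in> X \<Longrightarrow> F (f x) = g (F x)" using conj by blast
  have H2: "F (inv f x) = inv g (F x)" if "x \<in> X" "inv f x \<in> X" for x
  proof -
    have "F x = F (f (inv f x))" using surj_f_inv_f[OF bij_is_surj[OF bijf]] by simp
    also have "\<dots> = g (F (inv f x))" using conj[OF that(2)] .
    finally show ?thesis using inv_f_f[OF bij_is_inj[OF bijg]] by simp
  qed
  have H2': "F (inv (inv f) x) = inv (inv g) (F x)" if "x \<in> X" "inv (inv f) x \<in> X" for x
    using H1 that inv_inv_eq[OF bijf] inv_inv_eq[OF bijg] by simp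
  define Good where "Good v \<longleftrightarrow> (\<exists>u\<in>v. omega_lim UNIV g u \<subseteq> v \<and> omega_lim UNIV (inv g) u \<subseteq> v)" for v
  have goodW: "Good (omega_lim UNIV g (F \<xi>))" if "precompact_in X (fwd_orbit f \<xi>)" for \<xi>
    using good_lemma[where q=g, OF homf Fcont H1 H2 that] unfolding Good_def by blast
  have goodA: "Good (omega_lim UNIV (inv g) (F \<xi>))" if "precompact_in X (bwd_orbit f \<xi>)" for \<xi>
  proof -
    have pc': "precompact_in X (fwd_orbit (inv f) \<xi>)" using that unfolding bwd_eq .
    have "\<exists>u\<in>omega_lim UNIV (inv g) (F \<xi>). omega_lim UNIV (inv g) u \<subseteq> omega_lim UNIV (inv g) (F \<xi>)
           \<and> omega_lim UNIV (inv (inv g)) u \<subseteq> omega_lim UNIV (inv g) (F \<xi>)"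
      by (rule good_lemma[where q="inv g", OF homfi Fcont H2 H2' pc'])
    then have "\<exists>u\<in>omega_lim UNIV (inv g) (F \<xi>). omega_lim UNIV (inv g) u \<subseteq> omega_lim UNIV (inv g) (F \<xi>)
           \<and> omega_lim UNIV g u \<subseteq> omega_lim UNIV (inv g) (F \<xi>)"
      unfolding inv_inv_eq[OF bijg] .
    then show ?thesis unfolding Good_def by blast
  qed
  have trW: "omega_lim UNIV g (F \<xi>) = F ` omega_lim X f \<xi>" if "precompact_in X (fwd_orbit f \<xi>)" for \<xi>
  proof -
    have sub: "fwd_orbit f \<xi> \<subseteq> X" using that unfolding precompact_in_def by blast
    show ?thesis
      by (rule omega_transfer[OF Fcont that iter_conj[where X=X and p=f and q=g and F=F, OF H1 sub]])
  qed
  have trA: "omega_lim UNIV (inv g) (F \<xi>) = F ` alpha_lim X f \<xi>" if "precompact_in X (bwd_orbit f \<xi>)" for \<xi>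
  proof -
    have pc': "precompact_in X (fwd_orbit (inv f) \<xi>)" using that unfolding bwd_eq .
    have sub: "fwd_orbit (inv f) \<xi> \<subseteq> X" using pc' unfolding precompact_in_def by blast
    show ?thesis unfolding alpha_eq
      by (rule omega_transfer[OF Fcont pc' iter_conj[where X=X and p="inv f" and q="inv g" and F=F, OF H2 sub]])
  qed
  have keyZ: "v = w" if "Good v" "Good w" "omega_lim UNIV g z = v" "omega_lim UNIV (inv g) z = w" for v w z
    using key_Z[OF homg cbg cbginv] that unfolding Good_def by blast
  define Vals where "Vals = {v \<in> (\<lambda>S. F ` S) ` (omega_sets X f \<union> alpha_sets X f). Good v}"
  have hatval: "\<exists>\<xi>\<in>X. F ` S \<in> Vals \<and> (omega_lim UNIV g (F \<xi>) = F ` S \<or> omega_lim UNIV (inv g) (F \<xi>) = F ` S)"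
    if "S \<in> W_hat X f \<union> A_hat X f" for S
  proof (cases "S \<in> W_hat X f")
    case True
    then obtain \<xi> where x: "\<xi> \<in> X" "omega_lim X f \<xi> = S" "precompact_in X (fwd_orbit f \<xi>)"
      "S \<in> omega_sets X f"
      unfolding W_hat_def dom_attr_def by blast
    then show ?thesis using trW[OF x(3)] goodW[OF x(3)] unfolding Vals_def by auto
  next
    case False
    then have "S \<in> A_hat X f" using that by blast
    then obtain \<xi> where x: "\<xi> \<in> X" "alpha_lim X f \<xi> = S" "precompact_in X (bwd_orbit f \<xi>)"
      "S \<in> alpha_sets X f"
      unfolding A_hat_def dom_rep_def by blast
    then show ?thesis using trA[OF x(3)] goodA[OF x(3)] unfolding Vals_def by auto
  qed
  show ?thesis
  proof (intro ballI)
    fix S S' assume S: "S \<in> W_hat X f \<union> A_hat X f" and S': "S' \<in> W_hat X f \<union> A_hat X f"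
    obtain \<xi>0 where x0: "\<xi>0 \<in> X" "F ` S \<in> Vals"
      "omega_lim UNIV g (F \<xi>0) = F ` S \<or> omega_lim UNIV (inv g) (F \<xi>0) = F ` S"
      using hatval[OF S] by blast
    obtain \<xi>1 where x1: "\<xi>1 \<in> X" "F ` S' \<in> Vals"
      "omega_lim UNIV g (F \<xi>1) = F ` S' \<or> omega_lim UNIV (inv g) (F \<xi>1) = F ` S'"
      using hatval[OF S'] by blast
    obtain \<gamma> where \<gamma>: "path \<gamma>" "path_image \<gamma> \<subseteq> X" "pathstart \<gamma> = \<xi>0" "pathfinish \<gamma> = \<xi>1"
      using pc x0(1) x1(1) unfolding path_connected_def by blast
    define h where "h = F \<circ> \<gamma>"
    have hc: "continuous_on {0..1} h"
      unfolding h_def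
      by (rule continuous_on_compose[OF \<gamma>(1)[unfolded path_def] continuous_on_subset[OF Fcont \<gamma>(2)[unfolded path_image_def]]])
    have \<gamma>X: "\<gamma> t \<in> X" if "t \<in> {0..1}" for t using \<gamma>(2) that unfolding path_image_def by blast
    define C where "C v = {t \<in> {0..1}. omega_lim UNIV g (h t) = v \<or> omega_lim UNIV (inv g) (h t) = v}" for v
    have Cdisj: "v = w" if "v \<in> Vals" "w \<in> Vals" "t \<in> C v" "t \<in> C w" for v w t
    proof -
      have gv: "Good v" "Good w" using that(1,2) unfolding Vals_def by blast+
      show ?thesis using that(3,4) unfolding C_def
        using keyZ[OF gv(1) gv(2), of "h t"] keyZ[OF gv(2) gv(1), of "h t"] by auto
    qed
    define U where "U = C ` Vals - {{}}"
    have U: "U = {{0..1}}"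
    proof (rule real_Sierpinski_lemma)
      show "(0::real) \<le> 1" by simp
      have "countable Vals"
        using countable_image[OF T3, of "image F"] unfolding Vals_def
        by (rule countable_subset[rotated]) auto
      then show "countable U" unfolding U_def by simp
      show "pairwise disjnt U"
        unfolding pairwise_def disjnt_def U_def using Cdisj by blast
      show "closed A \<and> A \<noteq> {}" if "A \<in> U" for A
      proof -
        obtain v where v: "A = C v" "A \<noteq> {}" using \<open>A \<in> U\<close> unfolding U_def by blast
        have "C v = ({0..1} \<inter> h -` {x. omega_lim UNIV g x = v}) \<union> ({0..1} \<inter> h -` {x. omega_lim UNIV (inv g) x = v})"
          unfolding C_def by auto
        moreover have "closed ({0..1} \<inter> h -` {x. omega_lim UNIV g x = v})"
          by (rule continuous_closed_preimage[OF hc closed_atLeastAtMost basin_closed[OF cbg]])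
        moreover have "closed ({0..1} \<inter> h -` {x. omega_lim UNIV (inv g) x = v})"
          by (rule continuous_closed_preimage[OF hc closed_atLeastAtMost basin_closed_rev[OF cbginv]])
        ultimately show ?thesis using v by auto
      qed
      show "\<Union>U = {0..1}"
      proof
        show "\<Union>U \<subseteq> {0..1}" unfolding U_def C_def by auto
        show "{0..1} \<subseteq> \<Union>U"
        proof
          fix t :: real assume t: "t \<in> {0..1}"
          have hX: "h t = F (\<gamma> t)" unfolding h_def by simp
          have "\<exists>v \<in> Vals. t \<in> C v"
          proof (cases "precompact_in X (fwd_orbit f (\<gamma> t))")
            case True
            have "omega_lim X f (\<gamma> t) \<in> omega_sets X f" unfolding omega_sets_def using \<gamma>X[OF t] by blast
            then have "omega_lim UNIV g (h t) \<in> Vals"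
              unfolding Vals_def hX trW[OF True] using goodW[OF True] trW[OF True] by auto
            then show ?thesis unfolding C_def using t by blast
          next
            case False
            then have pb: "precompact_in X (bwd_orbit f (\<gamma> t))" using T2[OF \<gamma>X[OF t]] by blast
            have "alpha_lim X f (\<gamma> t) \<in> alpha_sets X f" unfolding alpha_sets_def using \<gamma>X[OF t] by blast
            then have "omega_lim UNIV (inv g) (h t) \<in> Vals"
              unfolding Vals_def hX trA[OF pb] using goodA[OF pb] trA[OF pb] by auto
            then show ?thesis unfolding C_def using t by blast
          qed
          then show "t \<in> \<Union>U" unfolding U_def by blast
        qed
      qed
    qed
    have h0: "h 0 = F \<xi>0" and h1: "h 1 = F \<xi>1"
      using \<gamma>(3,4) unfolding h_def pathstart_def pathfinish_def by auto
    have c0: "0 \<in> C (F ` S)" unfolding C_def using h0 x0(3) by auto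
    have c1: "1 \<in> C (F ` S')" unfolding C_def using h1 x1(3) by auto
    then have "C (F ` S') \<in> U" unfolding U_def using x1(2) by blast
    then have "C (F ` S') = {0..1}" using U by blast
    then have "0 \<in> C (F ` S')" by simp
    then show "F ` S = F ` S'" using Cdisj[OF x0(2) x1(2) c0] by blast
  qed
qed

end
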